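(* Under the standing assumptions, there are $\lambda_0>0$ and $C>0$ such that for all $0<\lambda<\lambda_0$, all $z\in\mathbb{C}$ with $\operatorname{Re}z\le\frac12(1-\frac1c)$, all $v\in L^2$ and all $u\in H^m(\mathbb{R})$ with $(\mathcal{A}^\lambda-z)u=v$, $$\|u\|_{H^{m/2}}\le C\big(\|u\|_{L^2_e}+\|v\|_{L^2}\big).$$
   Context: Standing assumptions: $f:\mathbb{R}\to\mathbb{R}$ is $C^1$ with $f(0)=f'(0)=0$. $\mathcal{M}$ is the Fourier multiplier with symbol $\alpha:\mathbb{R}\to[0,\infty)$, locally bounded, $a|k|^m\le\alpha(k)\le b|k|^m$ for all large $|k|$ ($m\ge1$, $a,b>0$). $c>1$ and $u_c\in H^m(\mathbb{R})$ is a real solution of $\mathcal{M}u_c+(1-\frac1c)u_c-\frac1cf(u_c)=0$ with $u_c(x)\to0$ as $|x|\to\infty$. With $\mathcal{E}^{\lambda,-}$ the Fourier multiplier with symbol $\frac{\lambda}{\lambda-ick}$, $\mathcal{A}^\lambda=\mathcal{M}+1-\frac1c(1-\mathcal{E}^{\lambda,-})(1+f'(u_c))$. Weighted norm: $e(x)=(f'(u_c(x)))^2$ and $\|u\|_{L^2_e}=(\int e(x)|u(x)|^2dx)^{1/2}$. *)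

theory Defs
  imports "HOL-Analysis.Analysis"
begin

definition is_L2 :: "(real \<Rightarrow> complex) \<Rightarrow> bool" where
  "is_L2 u \<longleftrightarrow> u \<in> borel_measurable lborel \<and> integrable lborel (\<lambda>x. (cmod (u x))\<^sup>2)"

definition L2_norm :: "(real \<Rightarrow> complex) \<Rightarrow> real" where
  "L2_norm u = sqrt (\<integral>x. (cmod (u x))\<^sup>2 \<partial>lborel)"

definition fourier_L1 :: "(real \<Rightarrow> complex) \<Rightarrow> real \<Rightarrow> complex" where
  "fourier_L1 \<phi> k = (\<integral>x. \<phi> x * exp (- (\<i> * complex_of_real (k * x))) \<partial>lborel)"

text \<open>\<open>fourier_L2 u g\<close>: \<open>g\<close> is (a representative of) the L^2 Fourier transform of \<open>u\<close>,
  characterised by the multiplication formula \<open>\<integral> g \<phi> = \<integral> u \<phi>^\<close> for all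
  \<open>\<phi> \<in> L^1 \<inter> L^2\<close> (this determines \<open>g\<close> almost everywhere).\<close>
definition fourier_L2 :: "(real \<Rightarrow> complex) \<Rightarrow> (real \<Rightarrow> complex) \<Rightarrow> bool" where
  "fourier_L2 u g \<longleftrightarrow> is_L2 u \<and> is_L2 g \<and>
     (\<forall>\<phi>. integrable lborel \<phi> \<and> is_L2 \<phi> \<longrightarrow>
        (\<integral>k. g k * \<phi> k \<partial>lborel) = (\<integral>x. u x * fourier_L1 \<phi> x \<partial>lborel))"

definition fourier :: "(real \<Rightarrow> complex) \<Rightarrow> real \<Rightarrow> complex" where
  "fourier u = (SOME g. fourier_L2 u g)"

definition sobolev :: "real \<Rightarrow> (real \<Rightarrow> complex) \<Rightarrow> bool" where
  "sobolev s u \<longleftrightarrow> (\<exists>g. fourier_L2 u g \<and>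
      integrable lborel (\<lambda>k. (1 + k\<^sup>2) powr s * (cmod (g k))\<^sup>2))"

definition sobolev_norm :: "real \<Rightarrow> (real \<Rightarrow> complex) \<Rightarrow> real" where
  "sobolev_norm s u = sqrt (\<integral>k. (1 + k\<^sup>2) powr s * (cmod (fourier u k))\<^sup>2 \<partial>lborel)"

definition L2e_norm :: "(real \<Rightarrow> real) \<Rightarrow> (real \<Rightarrow> real) \<Rightarrow> (real \<Rightarrow> complex) \<Rightarrow> real" where
  "L2e_norm f' uc u = sqrt (\<integral>x. (f' (uc x))\<^sup>2 * (cmod (u x))\<^sup>2 \<partial>lborel)"

text \<open>The profile equation \<open>M u_c + (1 - 1/c) u_c - (1/c) f(u_c) = 0\<close>, on the Fourier side.\<close>
definition profile_eq :: "(real \<Rightarrow> real) \<Rightarrow> real \<Rightarrow> (real \<Rightarrow> real) \<Rightarrow> (real \<Rightarrow> real) \<Rightarrow> bool" where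
  "profile_eq \<alpha> c f uc \<longleftrightarrow> (\<exists>g h.
      fourier_L2 (\<lambda>x. complex_of_real (uc x)) g \<and>
      fourier_L2 (\<lambda>x. complex_of_real (f (uc x))) h \<and>
      (AE k in lborel. complex_of_real (\<alpha> k) * g k + complex_of_real (1 - 1/c) * g k
                        - complex_of_real (1/c) * h k = 0))"

text \<open>\<open>(A^\<lambda> - z) u = v\<close> where
  \<open>A^\<lambda> = M + 1 - (1/c)(1 - E^{\<lambda>,-})(1 + f'(u_c))\<close>, \<open>E^{\<lambda>,-}\<close> having symbol \<open>\<lambda>/(\<lambda> - i c k)\<close>;
  stated on the Fourier side.\<close>
definition A_minus_z_eq ::
  "(real \<Rightarrow> real) \<Rightarrow> real \<Rightarrow> (real \<Rightarrow> real) \<Rightarrow> (real \<Rightarrow> real) \<Rightarrow> real \<Rightarrow> complex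
     \<Rightarrow> (real \<Rightarrow> complex) \<Rightarrow> (real \<Rightarrow> complex) \<Rightarrow> bool" where
  "A_minus_z_eq \<alpha> c f' uc lam z u v \<longleftrightarrow> (\<exists>gu gw gv.
      fourier_L2 u gu \<and>
      fourier_L2 (\<lambda>x. (1 + complex_of_real (f' (uc x))) * u x) gw \<and>
      fourier_L2 v gv \<and>
      (AE k in lborel. gv k =
          (complex_of_real (\<alpha> k) + 1 - z) * gu k
          - complex_of_real (1/c) *
              (1 - complex_of_real lam / (complex_of_real lam - \<i> * complex_of_real (c * k))) * gw k))"

end

theory Submission
  imports Defs "HOL-Probability.Probability"
begin

lemma gauss_ft:
  fixes \<sigma> t :: real assumes s: "\<sigma> > 0"
  shows "(\<integral>k. complex_of_real (exp (-(\<sigma>*k)\<^sup>2/2)) * exp (-(\<i> * complex_of_real (k*t))) \<partial>lborel)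
         = complex_of_real (2*pi*normal_density 0 \<sigma> t)"
proof -
  define s' where "s' = -t/\<sigma>"
  define g where "g = (\<lambda>x. std_normal_density x *\<^sub>R iexp (s' * x))"
  have "char std_normal_distribution s' = complex_of_real (exp (- (s'^2) / 2))"
    by (simp add: char_std_normal_distribution)
  moreover have "char std_normal_distribution s' = (\<integral>x. g x \<partial>lborel)"
    unfolding char_def g_def
    by (subst integral_density) (auto)
  ultimately have 1: "(\<integral>x. g x \<partial>lborel) = complex_of_real (exp (- (s'^2) / 2))" by simp
  have 2: "(\<integral>x. g x \<partial>lborel) = \<bar>\<sigma>\<bar> *\<^sub>R (\<integral>k. g (0 + \<sigma> * k) \<partial>lborel)"
    using s by (intro lborel_integral_real_affine) simp
  have 3: "g (0 + \<sigma> * k) = complex_of_real (1/sqrt (2*pi)) * (complex_of_real (exp (-(\<sigma>*k)\<^sup>2/2)) * exp (-(\<i> * complex_of_real (k*t))))" for k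
    using s unfolding g_def s'_def std_normal_density_def
    by (simp add: scaleR_conv_of_real field_simps power2_eq_square)
  have "(\<integral>k. g (0 + \<sigma> * k) \<partial>lborel) = complex_of_real (1/sqrt (2*pi)) * (\<integral>k. complex_of_real (exp (-(\<sigma>*k)\<^sup>2/2)) * exp (-(\<i> * complex_of_real (k*t))) \<partial>lborel)"
    unfolding 3 by simp
  with 1 2 s have "complex_of_real (exp (- (s'^2) / 2)) = complex_of_real (\<sigma>/sqrt (2*pi)) * (\<integral>k. complex_of_real (exp (-(\<sigma>*k)\<^sup>2/2)) * exp (-(\<i> * complex_of_real (k*t))) \<partial>lborel)"
    by (simp add: scaleR_conv_of_real)
  then have "(\<integral>k. complex_of_real (exp (-(\<sigma>*k)\<^sup>2/2)) * exp (-(\<i> * complex_of_real (k*t))) \<partial>lborel)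
     = complex_of_real (sqrt (2*pi)/\<sigma> * exp (- (s'^2) / 2))"
    using s by (simp add: field_simps)
  also have "sqrt (2*pi)/\<sigma> * exp (- (s'^2) / 2) = 2*pi*normal_density 0 \<sigma> t"
    using s unfolding normal_density_def s'_def
    by (simp add: real_sqrt_mult field_simps power2_eq_square)
  finally show ?thesis .
qed

lemma borel_measurable_cnj'[measurable]:
  "f \<in> borel_measurable M \<Longrightarrow> (\<lambda>x. cnj (f x)) \<in> borel_measurable M"
  by (rule borel_measurable_continuous_on[where f=cnj]) (auto intro: continuous_intros)

lemma integrable_prod_real:
  fixes f g :: "real \<Rightarrow> real"
  assumes f: "integrable lborel f" and g: "integrable lborel g"
  shows "integrable (lborel \<Otimes>\<^sub>M lborel) (\<lambda>(x,y). f x * g y)"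
proof (rule lborel_pair.Fubini_integrable)
  have [measurable]: "f \<in> borel_measurable borel" "g \<in> borel_measurable borel"
    using f g by auto
  show "(\<lambda>(x,y). f x * g y) \<in> borel_measurable (lborel \<Otimes>\<^sub>M lborel)" by measurable
  show "integrable lborel (\<lambda>x. \<integral>y. norm (case (x,y) of (x,y) \<Rightarrow> f x * g y) \<partial>lborel)"
    by (simp add: abs_mult f g integrable_abs)
  show "AE x in lborel. integrable lborel (\<lambda>y. case (x,y) of (x,y) \<Rightarrow> f x * g y)"
    using g by simp
qed

lemma fourier_L1_meas:
  assumes [measurable]: "\<phi> \<in> borel_measurable lborel"
  shows "fourier_L1 \<phi> \<in> borel_measurable lborel"
proof -
  have [measurable]: "\<phi> \<in> borel_measurable borel" using assms by simp
  have "(\<lambda>k. \<integral>x. \<phi> x * exp (- (\<i> * complex_of_real (k * x))) \<partial>lborel) \<in> borel_measurable lborel"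
    by measurable
  then show ?thesis unfolding fourier_L1_def[abs_def] .
qed

lemma fourier_L1_bound:
  assumes "integrable lborel \<phi>"
  shows "cmod (fourier_L1 \<phi> k) \<le> (\<integral>x. cmod (\<phi> x) \<partial>lborel)"
proof -
  have "cmod (fourier_L1 \<phi> k) \<le> (\<integral>x. cmod (\<phi> x * exp (- (\<i> * complex_of_real (k * x)))) \<partial>lborel)"
    unfolding fourier_L1_def by (rule integral_norm_bound)
  also have "\<dots> = (\<integral>x. cmod (\<phi> x) \<partial>lborel)"
    by (simp add: norm_mult)
  finally show ?thesis .
qed

lemma norm_integral_le_nn:
  "ennreal (norm (integral\<^sup>L M f)) \<le> (\<integral>\<^sup>+x. norm (f x) \<partial>M)"
  by (cases "integrable M f") (auto simp: integral_norm_bound_ennreal not_integrable_integral_eq)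

lemma gauss_integrable:
  fixes \<sigma> :: real assumes s: "\<sigma> > 0"
  shows "integrable lborel (\<lambda>k. exp (-(\<sigma>*k)\<^sup>2/2))"
proof -
  have "(\<lambda>k. exp (-(\<sigma>*k)\<^sup>2/2)) = (\<lambda>k. (sqrt (2*pi) / \<sigma>) * normal_density 0 (1/\<sigma>) k)"
    using s by (auto simp: normal_density_def real_sqrt_mult real_sqrt_divide field_simps power2_eq_square)
  moreover have "integrable lborel (\<lambda>k. (sqrt (2*pi) / \<sigma>) * normal_density 0 (1/\<sigma>) k)"
    using s by (intro integrable_mult_right integrable_normal_density) simp
  ultimately show ?thesis by simp
qed

lemma nn_normal_shift:
  fixes \<sigma> :: real assumes s: "\<sigma> > 0"
  shows "(\<integral>\<^sup>+y. ennreal (normal_density 0 \<sigma> (x - y)) \<partial>lborel) = 1"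
    "(\<integral>\<^sup>+x. ennreal (normal_density 0 \<sigma> (x - y)) \<partial>lborel) = 1"
proof -
  have e1: "normal_density 0 \<sigma> (x - y) = normal_density x \<sigma> y" for x y
    by (simp add: normal_density_def power2_commute)
  have e2: "normal_density 0 \<sigma> (x - y) = normal_density y \<sigma> x" for x y
    by (simp add: normal_density_def)
  show "(\<integral>\<^sup>+y. ennreal (normal_density 0 \<sigma> (x - y)) \<partial>lborel) = 1"
    unfolding e1 using s by (subst nn_integral_eq_integral) auto
  show "(\<integral>\<^sup>+x. ennreal (normal_density 0 \<sigma> (x - y)) \<partial>lborel) = 1"
    unfolding e2 using s by (subst nn_integral_eq_integral) auto
qed

lemma damped_identity:
  fixes \<phi> :: "real \<Rightarrow> complex" and \<sigma> :: real
  assumes meas[measurable]: "\<phi> \<in> borel_measurable lborel" and int: "integrable lborel \<phi>"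
    and s: "\<sigma> > 0"
  shows "complex_of_real (\<integral>k. exp (-(\<sigma>*k)\<^sup>2/2) * (cmod (fourier_L1 \<phi> k))\<^sup>2 \<partial>lborel)
     = (\<integral>x. \<phi> x * (\<integral>y. cnj (\<phi> y) * complex_of_real (2*pi*normal_density 0 \<sigma> (x - y)) \<partial>lborel) \<partial>lborel)"
proof -
  have [measurable]: "\<phi> \<in> borel_measurable borel" using meas by simp
  define F where "F = fourier_L1 \<phi>"
  define N1 where "N1 = (\<integral>x. cmod (\<phi> x) \<partial>lborel)"
  define D where "D = (\<lambda>k::real. exp (-(\<sigma>*k)\<^sup>2/2))"
  define E where "E = (\<lambda>k x::real. exp (-(\<i> * complex_of_real (k*x))))"
  have [measurable]: "D \<in> borel_measurable borel" unfolding D_def by measurable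
  have [measurable]: "case_prod E \<in> borel_measurable (borel \<Otimes>\<^sub>M borel)" unfolding E_def by measurable
  have Fm[measurable]: "F \<in> borel_measurable borel" unfolding F_def using fourier_L1_meas[OF meas] by simp
  have Fb: "cmod (F k) \<le> N1" for k unfolding F_def N1_def using fourier_L1_bound[OF int] .
  have N1pos: "N1 \<ge> 0" unfolding N1_def by simp
  have Dint: "integrable lborel D" unfolding D_def using gauss_integrable[OF s] .
  have Dpos: "D k \<ge> 0" for k unfolding D_def by simp
  have En: "cmod (E k x) = 1" for k x unfolding E_def by simp
  have Fdef: "F k = (\<integral>x. \<phi> x * E k x \<partial>lborel)" for k unfolding F_def fourier_L1_def E_def ..
  define H where "H = (\<lambda>k x. complex_of_real (D k) * (\<phi> x * E k x) * cnj (F k))"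
  have H_m: "case_prod H \<in> borel_measurable (lborel \<Otimes>\<^sub>M lborel)"
    unfolding H_def by measurable
  have step1: "complex_of_real (D k * (cmod (F k))\<^sup>2) = (\<integral>x. H k x \<partial>lborel)" for k
  proof -
    have "(\<integral>x. H k x \<partial>lborel) = complex_of_real (D k) * (\<integral>x. \<phi> x * E k x \<partial>lborel) * cnj (F k)"
      unfolding H_def by simp
    also have "\<dots> = complex_of_real (D k) * (F k * cnj (F k))" by (simp add: Fdef)
    also have "\<dots> = complex_of_real (D k * (cmod (F k))\<^sup>2)"
      using complex_norm_square[of "F k"] by (metis of_real_mult)
    finally show ?thesis by simp
  qed
  have H_int: "integrable (lborel \<Otimes>\<^sub>M lborel) (case_prod H)"
  proof (rule Bochner_Integration.integrable_bound)
    show "integrable (lborel \<Otimes>\<^sub>M lborel) (\<lambda>(k,x). (D k * N1) * cmod (\<phi> x))"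
      by (rule integrable_prod_real) (use Dint int in auto)
    show "case_prod H \<in> borel_measurable (lborel \<Otimes>\<^sub>M lborel)" by (rule H_m)
    show "AE p in lborel \<Otimes>\<^sub>M lborel. norm (case_prod H p) \<le> norm ((\<lambda>(k,x). (D k * N1) * cmod (\<phi> x)) p)"
    proof -
      have ptw: "norm (H k x) \<le> D k * N1 * cmod (\<phi> x)" for k x
      proof -
        have "norm (H k x) = D k * cmod (\<phi> x) * cmod (F k)"
          unfolding H_def using Dpos by (simp add: norm_mult En)
        also have "\<dots> \<le> D k * cmod (\<phi> x) * N1"
          using Fb Dpos by (intro mult_left_mono) auto
        finally show ?thesis by (simp add: mult_ac)
      qed
      show ?thesis using ptw Dpos N1pos by (intro AE_I2) (auto simp: abs_mult)
    qed
  qed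
  have "complex_of_real (\<integral>k. D k * (cmod (F k))\<^sup>2 \<partial>lborel) = (\<integral>k. (\<integral>x. H k x \<partial>lborel) \<partial>lborel)"
    by (subst integral_complex_of_real[symmetric]) (simp only: step1)
  also have "\<dots> = (\<integral>x. (\<integral>k. H k x \<partial>lborel) \<partial>lborel)"
    using lborel_pair.Fubini_integral[OF H_int] by simp
  also have "\<dots> = (\<integral>x. \<phi> x * (\<integral>y. cnj (\<phi> y) * complex_of_real (2*pi*normal_density 0 \<sigma> (x - y)) \<partial>lborel) \<partial>lborel)"
  proof (rule Bochner_Integration.integral_cong[OF refl])
    fix x
    define G where "G = (\<lambda>k y. complex_of_real (D k) * E k x * (cnj (\<phi> y) * cnj (E k y)))"
    have G_m: "case_prod G \<in> borel_measurable (lborel \<Otimes>\<^sub>M lborel)"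
      unfolding G_def by measurable
    have G_int: "integrable (lborel \<Otimes>\<^sub>M lborel) (case_prod G)"
    proof (rule Bochner_Integration.integrable_bound)
      show "integrable (lborel \<Otimes>\<^sub>M lborel) (\<lambda>(k,y). D k * cmod (\<phi> y))"
        by (rule integrable_prod_real) (use Dint int in auto)
      show "case_prod G \<in> borel_measurable (lborel \<Otimes>\<^sub>M lborel)" by (rule G_m)
      show "AE p in lborel \<Otimes>\<^sub>M lborel. norm (case_prod G p) \<le> norm ((\<lambda>(k,y). D k * cmod (\<phi> y)) p)"
        by (rule AE_I2) (auto simp: G_def norm_mult En Dpos)
    qed
    have cF: "cnj (F k) = (\<integral>y. cnj (\<phi> y) * cnj (E k y) \<partial>lborel)" for k
      unfolding Fdef Bochner_Integration.integral_cnj[symmetric] by simp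
    have "(\<integral>k. H k x \<partial>lborel) = (\<integral>k. \<phi> x * (\<integral>y. G k y \<partial>lborel) \<partial>lborel)"
    proof (intro Bochner_Integration.integral_cong[OF refl])
      fix k
      have "(\<integral>y. G k y \<partial>lborel) = (complex_of_real (D k) * E k x) * (\<integral>y. cnj (\<phi> y) * cnj (E k y) \<partial>lborel)"
        unfolding G_def by (rule integral_mult_right_zero)
      then show "H k x = \<phi> x * (\<integral>y. G k y \<partial>lborel)"
        unfolding H_def cF by (simp add: mult_ac)
    qed
    also have "\<dots> = \<phi> x * (\<integral>k. (\<integral>y. G k y \<partial>lborel) \<partial>lborel)" by simp
    also have "(\<integral>k. (\<integral>y. G k y \<partial>lborel) \<partial>lborel) = (\<integral>y. (\<integral>k. G k y \<partial>lborel) \<partial>lborel)"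
      using lborel_pair.Fubini_integral[OF G_int] by simp
    also have "\<dots> = (\<integral>y. cnj (\<phi> y) * complex_of_real (2*pi*normal_density 0 \<sigma> (x - y)) \<partial>lborel)"
    proof (rule Bochner_Integration.integral_cong[OF refl])
      fix y
      have e: "E k x * cnj (E k y) = exp (-(\<i> * complex_of_real (k*(x-y))))" for k
      proof -
        have "cnj (E k y) = exp (\<i> * complex_of_real (k*y))" unfolding E_def by (simp add: exp_cnj)
        then have "E k x * cnj (E k y) = exp (-(\<i> * complex_of_real (k*x)) + \<i> * complex_of_real (k*y))"
          unfolding E_def by (simp only: exp_add)
        also have "-(\<i> * complex_of_real (k*x)) + \<i> * complex_of_real (k*y) = -(\<i> * complex_of_real (k*(x-y)))"
          by (simp add: algebra_simps)
        finally show ?thesis .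
      qed
      have "(\<integral>k. G k y \<partial>lborel) = (\<integral>k. cnj (\<phi> y) * (complex_of_real (D k) * (E k x * cnj (E k y))) \<partial>lborel)"
        unfolding G_def by (simp add: mult_ac)
      also have "\<dots> = cnj (\<phi> y) * (\<integral>k. complex_of_real (D k) * exp (-(\<i> * complex_of_real (k*(x-y)))) \<partial>lborel)"
        unfolding e by simp
      also have "\<dots> = cnj (\<phi> y) * complex_of_real (2*pi*normal_density 0 \<sigma> (x - y))"
        unfolding D_def using gauss_ft[OF s, of "x - y"] by (simp only:)
      finally show "(\<integral>k. G k y \<partial>lborel) = cnj (\<phi> y) * complex_of_real (2*pi*normal_density 0 \<sigma> (x - y))" .
    qed
    finally show "(\<integral>k. H k x \<partial>lborel) = \<phi> x * (\<integral>y. cnj (\<phi> y) * complex_of_real (2*pi*normal_density 0 \<sigma> (x - y)) \<partial>lborel)" .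
  qed
  finally show ?thesis unfolding D_def F_def .
qed

lemma damped_bound:
  fixes \<phi> :: "real \<Rightarrow> complex" and \<sigma> :: real
  assumes meas[measurable]: "\<phi> \<in> borel_measurable lborel"
    and sq: "integrable lborel (\<lambda>x. (cmod (\<phi> x))\<^sup>2)" and s: "\<sigma> > 0"
  shows "ennreal (norm (\<integral>x. \<phi> x * (\<integral>y. cnj (\<phi> y) * complex_of_real (2*pi*normal_density 0 \<sigma> (x - y)) \<partial>lborel) \<partial>lborel))
     \<le> ennreal (2*pi * (\<integral>x. (cmod (\<phi> x))\<^sup>2 \<partial>lborel))"
proof -
  have [measurable]: "\<phi> \<in> borel_measurable borel" using meas by simp
  define a where "a = (\<lambda>x. cmod (\<phi> x))"
  define K where "K = (\<lambda>x y. normal_density 0 \<sigma> (x - y))"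
  have am[measurable]: "a \<in> borel_measurable borel" unfolding a_def by measurable
  have Km[measurable]: "case_prod K \<in> borel_measurable (borel \<Otimes>\<^sub>M borel)" unfolding K_def by measurable
  have Kpos: "K x y \<ge> 0" for x y unfolding K_def by simp
  have apos: "a x \<ge> 0" for x unfolding a_def by simp
  define J where "J = (\<lambda>x. \<integral>y. cnj (\<phi> y) * complex_of_real (2*pi*K x y) \<partial>lborel)"
  have K1: "(\<integral>\<^sup>+y. ennreal (K x y) \<partial>lborel) = 1" for x unfolding K_def using nn_normal_shift[OF s] by simp
  have K2: "(\<integral>\<^sup>+x. ennreal (K x y) \<partial>lborel) = 1" for y unfolding K_def using nn_normal_shift[OF s] by simp
  have "ennreal (norm (\<integral>x. \<phi> x * J x \<partial>lborel)) \<le> (\<integral>\<^sup>+x. norm (\<phi> x * J x) \<partial>lborel)"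
    by (rule norm_integral_le_nn)
  also have "\<dots> \<le> (\<integral>\<^sup>+x. ennreal (a x) * (\<integral>\<^sup>+y. ennreal (a y * (2*pi*K x y)) \<partial>lborel) \<partial>lborel)"
  proof (rule nn_integral_mono)
    fix x
    have "ennreal (norm (J x)) \<le> (\<integral>\<^sup>+y. norm (cnj (\<phi> y) * complex_of_real (2*pi*K x y)) \<partial>lborel)"
      unfolding J_def by (rule norm_integral_le_nn)
    also have "\<dots> = (\<integral>\<^sup>+y. ennreal (a y * (2*pi*K x y)) \<partial>lborel)"
      using Kpos by (simp add: a_def norm_mult)
    finally have "ennreal (norm (J x)) \<le> (\<integral>\<^sup>+y. ennreal (a y * (2*pi*K x y)) \<partial>lborel)" .
    then have "ennreal (a x) * ennreal (norm (J x)) \<le> ennreal (a x) * (\<integral>\<^sup>+y. ennreal (a y * (2*pi*K x y)) \<partial>lborel)"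
      by (rule mult_left_mono) simp
    then show "ennreal (norm (\<phi> x * J x)) \<le> ennreal (a x) * (\<integral>\<^sup>+y. ennreal (a y * (2*pi*K x y)) \<partial>lborel)"
      by (simp add: norm_mult a_def ennreal_mult)
  qed
  also have "\<dots> = (\<integral>\<^sup>+x. (\<integral>\<^sup>+y. ennreal (a x * (a y * (2*pi*K x y))) \<partial>lborel) \<partial>lborel)"
  proof (intro nn_integral_cong)
    fix x
    have "ennreal (a x) * (\<integral>\<^sup>+y. ennreal (a y * (2*pi*K x y)) \<partial>lborel)
       = (\<integral>\<^sup>+y. ennreal (a x) * ennreal (a y * (2*pi*K x y)) \<partial>lborel)"
      by (rule nn_integral_cmult[symmetric]) simp
    also have "\<dots> = (\<integral>\<^sup>+y. ennreal (a x * (a y * (2*pi*K x y))) \<partial>lborel)"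
      by (intro nn_integral_cong) (simp add: ennreal_mult apos Kpos)
    finally show "ennreal (a x) * (\<integral>\<^sup>+y. ennreal (a y * (2*pi*K x y)) \<partial>lborel)
       = (\<integral>\<^sup>+y. ennreal (a x * (a y * (2*pi*K x y))) \<partial>lborel)" .
  qed
  also have "\<dots> \<le> (\<integral>\<^sup>+x. (\<integral>\<^sup>+y. ennreal (pi * (a x)\<^sup>2 * K x y) + ennreal (pi * (a y)\<^sup>2 * K x y) \<partial>lborel) \<partial>lborel)"
  proof (intro nn_integral_mono)
    fix x y
    have "2 * (a x * a y) \<le> (a x)\<^sup>2 + (a y)\<^sup>2" using sum_squares_bound[of "a x" "a y"] by (simp add: mult.assoc)
    then have "a x * (a y * (2*pi*K x y)) \<le> pi * (a x)\<^sup>2 * K x y + pi * (a y)\<^sup>2 * K x y"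
    proof -
      assume h: "2 * (a x * a y) \<le> (a x)\<^sup>2 + (a y)\<^sup>2"
      have "a x * (a y * (2*pi*K x y)) = (2 * (a x * a y)) * (pi * K x y)" by (simp add: mult_ac)
      also have "\<dots> \<le> ((a x)\<^sup>2 + (a y)\<^sup>2) * (pi * K x y)"
        using h Kpos by (intro mult_right_mono) auto
      finally show ?thesis by (simp add: algebra_simps)
    qed
    then show "ennreal (a x * (a y * (2*pi*K x y))) \<le> ennreal (pi * (a x)\<^sup>2 * K x y) + ennreal (pi * (a y)\<^sup>2 * K x y)"
    proof -
      assume h: "a x * (a y * (2*pi*K x y)) \<le> pi * (a x)\<^sup>2 * K x y + pi * (a y)\<^sup>2 * K x y"
      have "ennreal (a x * (a y * (2*pi*K x y))) \<le> ennreal (pi * (a x)\<^sup>2 * K x y + pi * (a y)\<^sup>2 * K x y)"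
        using h by (rule ennreal_leI)
      also have "\<dots> = ennreal (pi * (a x)\<^sup>2 * K x y) + ennreal (pi * (a y)\<^sup>2 * K x y)"
        using Kpos by (intro ennreal_plus) auto
      finally show ?thesis .
    qed
  qed
  also have "\<dots> = (\<integral>\<^sup>+x. (\<integral>\<^sup>+y. ennreal (pi * (a x)\<^sup>2 * K x y) \<partial>lborel) \<partial>lborel)
              + (\<integral>\<^sup>+x. (\<integral>\<^sup>+y. ennreal (pi * (a y)\<^sup>2 * K x y) \<partial>lborel) \<partial>lborel)"
    by (subst nn_integral_add[symmetric]; simp add: nn_integral_add)+
  also have "(\<integral>\<^sup>+x. (\<integral>\<^sup>+y. ennreal (pi * (a y)\<^sup>2 * K x y) \<partial>lborel) \<partial>lborel)
      = (\<integral>\<^sup>+y. (\<integral>\<^sup>+x. ennreal (pi * (a y)\<^sup>2 * K x y) \<partial>lborel) \<partial>lborel)"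
    by (rule lborel_pair.Fubini'[symmetric]) simp
  also have "(\<integral>\<^sup>+y. (\<integral>\<^sup>+x. ennreal (pi * (a y)\<^sup>2 * K x y) \<partial>lborel) \<partial>lborel) = (\<integral>\<^sup>+y. ennreal (pi * (a y)\<^sup>2) \<partial>lborel)"
    by (intro nn_integral_cong) (simp add: ennreal_mult Kpos nn_integral_cmult K2)
  also have "(\<integral>\<^sup>+x. (\<integral>\<^sup>+y. ennreal (pi * (a x)\<^sup>2 * K x y) \<partial>lborel) \<partial>lborel) = (\<integral>\<^sup>+y. ennreal (pi * (a y)\<^sup>2) \<partial>lborel)"
    by (intro nn_integral_cong) (simp add: ennreal_mult Kpos nn_integral_cmult K1)
  also have "(\<integral>\<^sup>+y. ennreal (pi * (a y)\<^sup>2) \<partial>lborel) = ennreal (pi * (\<integral>x. (cmod (\<phi> x))\<^sup>2 \<partial>lborel))"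
    using sq by (subst nn_integral_eq_integral) (auto simp: a_def)
  finally show ?thesis unfolding J_def K_def
    using sq by (simp add: ennreal_plus[symmetric] integral_nonneg_AE del: ennreal_plus)
qed

lemma plancherel_le:
  fixes \<phi> :: "real \<Rightarrow> complex"
  assumes meas[measurable]: "\<phi> \<in> borel_measurable lborel" and int: "integrable lborel \<phi>"
    and sq: "integrable lborel (\<lambda>x. (cmod (\<phi> x))\<^sup>2)"
  shows "is_L2 (fourier_L1 \<phi>)"
    and "(\<integral>k. (cmod (fourier_L1 \<phi> k))\<^sup>2 \<partial>lborel) \<le> 2*pi * (\<integral>x. (cmod (\<phi> x))\<^sup>2 \<partial>lborel)"
proof -
  define F where "F = fourier_L1 \<phi>"
  define B where "B = 2*pi * (\<integral>x. (cmod (\<phi> x))\<^sup>2 \<partial>lborel)"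
  have Bpos: "B \<ge> 0" unfolding B_def by simp
  have Fm[measurable]: "F \<in> borel_measurable borel" unfolding F_def using fourier_L1_meas[OF meas] by simp
  define N1 where "N1 = (\<integral>x. cmod (\<phi> x) \<partial>lborel)"
  have Fb: "cmod (F k) \<le> N1" for k unfolding F_def N1_def using fourier_L1_bound[OF int] .
  have damp: "(\<integral>\<^sup>+k. ennreal (exp (-(\<sigma>*k)\<^sup>2/2) * (cmod (F k))\<^sup>2) \<partial>lborel) \<le> ennreal B" if s: "\<sigma> > 0" for \<sigma>
  proof -
    define I where "I = (\<integral>k. exp (-(\<sigma>*k)\<^sup>2/2) * (cmod (F k))\<^sup>2 \<partial>lborel)"
    define T where "T = (\<integral>x. \<phi> x * (\<integral>y. cnj (\<phi> y) * complex_of_real (2*pi*normal_density 0 \<sigma> (x - y)) \<partial>lborel) \<partial>lborel)"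
    have eq: "complex_of_real I = T" unfolding I_def T_def F_def by (rule damped_identity[OF meas int s])
    have "ennreal (norm T) \<le> ennreal B" unfolding T_def B_def
      using damped_bound[OF meas sq s] .
    then have "norm T \<le> B" using Bpos by (simp add: ennreal_le_iff)
    then have IB: "I \<le> B" using eq[symmetric] by (auto simp: abs_le_iff)
    have intg: "integrable lborel (\<lambda>k. exp (-(\<sigma>*k)\<^sup>2/2) * (cmod (F k))\<^sup>2)"
    proof (rule Bochner_Integration.integrable_bound)
      show "integrable lborel (\<lambda>k. exp (-(\<sigma>*k)\<^sup>2/2) * N1\<^sup>2)"
        using gauss_integrable[OF s] by simp
      show "(\<lambda>k. exp (-(\<sigma>*k)\<^sup>2/2) * (cmod (F k))\<^sup>2) \<in> borel_measurable lborel" by simp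
      show "AE k in lborel. norm (exp (-(\<sigma>*k)\<^sup>2/2) * (cmod (F k))\<^sup>2) \<le> norm (exp (-(\<sigma>*k)\<^sup>2/2) * N1\<^sup>2)"
      proof (rule AE_I2)
        fix k
        have "(cmod (F k))\<^sup>2 \<le> N1\<^sup>2" using Fb[of k] by (intro power_mono) auto
        then show "norm (exp (-(\<sigma>*k)\<^sup>2/2) * (cmod (F k))\<^sup>2) \<le> norm (exp (-(\<sigma>*k)\<^sup>2/2) * N1\<^sup>2)"
          by (simp add: abs_mult)
      qed
    qed
    have "(\<integral>\<^sup>+k. ennreal (exp (-(\<sigma>*k)\<^sup>2/2) * (cmod (F k))\<^sup>2) \<partial>lborel) = ennreal I"
      unfolding I_def using intg by (intro nn_integral_eq_integral) auto
    with IB show ?thesis by (simp add: ennreal_leI)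
  qed
  define f where "f = (\<lambda>n::nat. \<lambda>k. ennreal (exp (-(inverse (real (Suc n))*k)\<^sup>2/2) * (cmod (F k))\<^sup>2))"
  have inc: "incseq f"
  proof (rule incseq_SucI, rule le_funI)
    fix n k
    have "(inverse (real (Suc (Suc n)))*k)\<^sup>2 \<le> (inverse (real (Suc n))*k)\<^sup>2"
    proof -
      have "(1 + real n)\<^sup>2 \<le> (real n + 2)\<^sup>2" by (intro power_mono) auto
      then have "k\<^sup>2 * (1 + real n)\<^sup>2 \<le> k\<^sup>2 * (real n + 2)\<^sup>2" by (intro mult_left_mono) auto
      then show ?thesis by (simp add: power_mult_distrib field_simps divide_right_mono)
    qed
    then show "f n k \<le> f (Suc n) k" unfolding f_def
      by (intro ennreal_leI mult_right_mono) auto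
  qed
  have fm: "f i \<in> borel_measurable lborel" for i unfolding f_def by simp
  have lim: "(\<lambda>i. f i k) \<longlonglongrightarrow> ennreal ((cmod (F k))\<^sup>2)" for k
  proof -
    have "(\<lambda>i. exp (-(inverse (real (Suc i))*k)\<^sup>2/2) * (cmod (F k))\<^sup>2) \<longlonglongrightarrow> exp (-(0*k)\<^sup>2/2) * (cmod (F k))\<^sup>2"
      by (intro tendsto_intros LIMSEQ_inverse_real_of_nat) simp
    then show ?thesis unfolding f_def by (intro tendsto_ennrealI) simp
  qed
  have L: "(\<lambda>n. integral\<^sup>N lborel (f n)) \<longlonglongrightarrow> (\<integral>\<^sup>+k. ennreal ((cmod (F k))\<^sup>2) \<partial>lborel)"
    using nn_integral_LIMSEQ[OF inc fm lim] .
  have "integral\<^sup>N lborel (f n) \<le> ennreal B" for n unfolding f_def by (rule damp) simp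
  then have NB: "(\<integral>\<^sup>+k. ennreal ((cmod (F k))\<^sup>2) \<partial>lborel) \<le> ennreal B"
    using L by (intro LIMSEQ_le_const2) auto
  have intF: "integrable lborel (\<lambda>k. (cmod (F k))\<^sup>2)"
    unfolding integrable_iff_bounded using NB by (auto simp: top.not_eq_extremum intro: le_less_trans)
  show "is_L2 (fourier_L1 \<phi>)" unfolding is_L2_def F_def[symmetric] using intF by simp
  have "ennreal (\<integral>k. (cmod (F k))\<^sup>2 \<partial>lborel) \<le> ennreal B"
    using NB intF by (subst nn_integral_eq_integral[symmetric]) auto
  then show "(\<integral>k. (cmod (fourier_L1 \<phi> k))\<^sup>2 \<partial>lborel) \<le> 2*pi * (\<integral>x. (cmod (\<phi> x))\<^sup>2 \<partial>lborel)"
    using Bpos unfolding F_def B_def by (simp add: ennreal_le_iff)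
qed

lemma is_L2_meas: "is_L2 u \<Longrightarrow> u \<in> borel_measurable borel"
  unfolding is_L2_def by simp

lemma is_L2_sq: "is_L2 u \<Longrightarrow> integrable lborel (\<lambda>x. (cmod (u x))\<^sup>2)"
  unfolding is_L2_def by simp

lemma L2_prod_int:
  fixes f g :: "real \<Rightarrow> complex"
  assumes f: "is_L2 f" and g: "is_L2 g"
  shows "integrable lborel (\<lambda>x. f x * g x)"
proof (rule Bochner_Integration.integrable_bound)
  have [measurable]: "f \<in> borel_measurable borel" "g \<in> borel_measurable borel"
    using f g by (auto dest: is_L2_meas)
  show "integrable lborel (\<lambda>x. (cmod (f x))\<^sup>2 + (cmod (g x))\<^sup>2)"
    using f g by (auto dest: is_L2_sq)
  show "(\<lambda>x. f x * g x) \<in> borel_measurable lborel" by simp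
  show "AE x in lborel. norm (f x * g x) \<le> norm ((cmod (f x))\<^sup>2 + (cmod (g x))\<^sup>2)"
  proof (rule AE_I2)
    fix x
    have "2 * (cmod (f x) * cmod (g x)) \<le> (cmod (f x))\<^sup>2 + (cmod (g x))\<^sup>2"
      using sum_squares_bound[of "cmod (f x)" "cmod (g x)"] by (simp add: mult.assoc)
    moreover have "cmod (f x) * cmod (g x) \<ge> 0" by simp
    ultimately have a: "cmod (f x) * cmod (g x) \<le> (cmod (f x))\<^sup>2 + (cmod (g x))\<^sup>2" by linarith
    show "norm (f x * g x) \<le> norm ((cmod (f x))\<^sup>2 + (cmod (g x))\<^sup>2)"
      using a by (simp add: norm_mult)
  qed
qed

lemma L2_diff:
  fixes f g :: "real \<Rightarrow> complex"
  assumes f: "is_L2 f" and g: "is_L2 g"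
  shows "is_L2 (\<lambda>x. f x - g x)"
  unfolding is_L2_def
proof
  have [measurable]: "f \<in> borel_measurable borel" "g \<in> borel_measurable borel"
    using f g by (auto dest: is_L2_meas)
  show "(\<lambda>x. f x - g x) \<in> borel_measurable lborel" by simp
  show "integrable lborel (\<lambda>x. (cmod (f x - g x))\<^sup>2)"
  proof (rule Bochner_Integration.integrable_bound)
    show "integrable lborel (\<lambda>x. 2 * ((cmod (f x))\<^sup>2 + (cmod (g x))\<^sup>2))"
      using is_L2_sq[OF f] is_L2_sq[OF g] by (intro integrable_mult_right Bochner_Integration.integrable_add)
    show "(\<lambda>x. (cmod (f x - g x))\<^sup>2) \<in> borel_measurable lborel" by simp
    show "AE x in lborel. norm ((cmod (f x - g x))\<^sup>2) \<le> norm (2 * ((cmod (f x))\<^sup>2 + (cmod (g x))\<^sup>2))"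
    proof (rule AE_I2)
      fix x
      have "cmod (f x - g x) \<le> cmod (f x) + cmod (g x)" by (rule norm_triangle_ineq4)
      then have "(cmod (f x - g x))\<^sup>2 \<le> (cmod (f x) + cmod (g x))\<^sup>2" by (intro power_mono) auto
      also have "\<dots> \<le> 2 * ((cmod (f x))\<^sup>2 + (cmod (g x))\<^sup>2)"
        using sum_squares_bound[of "cmod (f x)" "cmod (g x)"] by (simp add: power2_sum)
      finally show "norm ((cmod (f x - g x))\<^sup>2) \<le> norm (2 * ((cmod (f x))\<^sup>2 + (cmod (g x))\<^sup>2))"
        by simp
    qed
  qed
qed

lemma fourier_L2_linear:
  assumes h1: "fourier_L2 u1 g1" and h2: "fourier_L2 u2 g2"
  shows "fourier_L2 (\<lambda>x. u1 x - u2 x) (\<lambda>k. g1 k - g2 k)"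
  unfolding fourier_L2_def
proof (intro conjI allI impI)
  show "is_L2 (\<lambda>x. u1 x - u2 x)" using h1 h2 unfolding fourier_L2_def by (auto intro: L2_diff)
  show "is_L2 (\<lambda>k. g1 k - g2 k)" using h1 h2 unfolding fourier_L2_def by (auto intro: L2_diff)
  fix \<phi> assume p: "integrable lborel \<phi> \<and> is_L2 \<phi>"
  then have pm: "\<phi> \<in> borel_measurable lborel" by auto
  have pf: "is_L2 (fourier_L1 \<phi>)"
    using p plancherel_le(1)[OF pm] by (auto dest: is_L2_sq)
  have L: "is_L2 u1" "is_L2 u2" "is_L2 g1" "is_L2 g2" using h1 h2 unfolding fourier_L2_def by auto
  have i1: "integrable lborel (\<lambda>k. g1 k * \<phi> k)" "integrable lborel (\<lambda>k. g2 k * \<phi> k)"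
    using L2_prod_int[OF L(3)] L2_prod_int[OF L(4)] p by auto
  have i2: "integrable lborel (\<lambda>k. u1 k * fourier_L1 \<phi> k)" "integrable lborel (\<lambda>k. u2 k * fourier_L1 \<phi> k)"
    using L2_prod_int[OF L(1) pf] L2_prod_int[OF L(2) pf] by auto
  have "(\<integral>k. (g1 k - g2 k) * \<phi> k \<partial>lborel) = (\<integral>k. g1 k * \<phi> k - g2 k * \<phi> k \<partial>lborel)"
    by (simp add: left_diff_distrib)
  also have "\<dots> = (\<integral>k. g1 k * \<phi> k \<partial>lborel) - (\<integral>k. g2 k * \<phi> k \<partial>lborel)"
    using i1 by (rule Bochner_Integration.integral_diff)
  also have "\<dots> = (\<integral>x. u1 x * fourier_L1 \<phi> x \<partial>lborel) - (\<integral>x. u2 x * fourier_L1 \<phi> x \<partial>lborel)"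
    using h1 h2 p unfolding fourier_L2_def by auto
  also have "\<dots> = (\<integral>x. u1 x * fourier_L1 \<phi> x - u2 x * fourier_L1 \<phi> x \<partial>lborel)"
    using i2 by (rule Bochner_Integration.integral_diff[symmetric])
  also have "\<dots> = (\<integral>x. (u1 x - u2 x) * fourier_L1 \<phi> x \<partial>lborel)"
    by (simp add: left_diff_distrib)
  finally show "(\<integral>k. (g1 k - g2 k) * \<phi> k \<partial>lborel) = (\<integral>x. (u1 x - u2 x) * fourier_L1 \<phi> x \<partial>lborel)" .
qed

lemma fourier_L2_bound:
  assumes hg: "fourier_L2 h g"
  shows "(\<integral>k. (cmod (g k))\<^sup>2 \<partial>lborel) \<le> 2*pi * (\<integral>x. (cmod (h x))\<^sup>2 \<partial>lborel)"
proof -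
  have Lh: "is_L2 h" and Lg: "is_L2 g" using hg unfolding fourier_L2_def by auto
  have [measurable]: "g \<in> borel_measurable borel" "h \<in> borel_measurable borel"
    using Lh Lg by (auto dest: is_L2_meas)
  have gsq: "integrable lborel (\<lambda>k. (cmod (g k))\<^sup>2)" and hsq: "integrable lborel (\<lambda>k. (cmod (h k))\<^sup>2)"
    using Lh Lg by (auto dest: is_L2_sq)
  define B0 where "B0 = (\<integral>x. (cmod (h x))\<^sup>2 \<partial>lborel)"
  define I where "I = (\<lambda>n::nat. \<integral>k. indicator {-real n..real n} k * (cmod (g k))\<^sup>2 \<partial>lborel)"
  have In: "I n \<le> 2*pi*B0" for n
  proof -
    define \<phi> where "\<phi> = (\<lambda>k. indicator {-real n..real n} k *\<^sub>R cnj (g k))"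
    have pm[measurable]: "\<phi> \<in> borel_measurable borel" unfolding \<phi>_def by measurable
    have ind_int: "integrable lborel (\<lambda>k. indicator {-real n..real n} k :: real)" by simp
    have pint: "integrable lborel \<phi>"
    proof (rule Bochner_Integration.integrable_bound)
      show "integrable lborel (\<lambda>k. indicator {-real n..real n} k + (cmod (g k))\<^sup>2)"
        using ind_int gsq by (rule Bochner_Integration.integrable_add)
      show "\<phi> \<in> borel_measurable lborel" by simp
      show "AE k in lborel. norm (\<phi> k) \<le> norm (indicator {-real n..real n} k + (cmod (g k))\<^sup>2)"
      proof (rule AE_I2)
        fix k
        have "(cmod (g k) - 1) * (cmod (g k) - 1) \<ge> 0" by simp
        then have "cmod (g k) * cmod (g k) - 2 * cmod (g k) + 1 \<ge> 0" by (simp add: algebra_simps)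
        then have "cmod (g k) \<le> 1 + (cmod (g k))\<^sup>2"
          using norm_ge_zero[of "g k"] unfolding power2_eq_square by linarith
        then show "norm (\<phi> k) \<le> norm (indicator {-real n..real n} k + (cmod (g k))\<^sup>2)"
          unfolding \<phi>_def by (auto simp: indicator_def)
      qed
    qed
    have psq_eq: "(cmod (\<phi> k))\<^sup>2 = indicator {-real n..real n} k * (cmod (g k))\<^sup>2" for k
      unfolding \<phi>_def by (auto simp: indicator_def)
    have psq: "integrable lborel (\<lambda>k. (cmod (\<phi> k))\<^sup>2)"
      unfolding psq_eq using integrable_mult_indicator[of "{-real n..real n}" lborel "\<lambda>k. (cmod (g k))\<^sup>2"] gsq by simp
    have Lp: "is_L2 \<phi>" unfolding is_L2_def using psq by simp
    have P1: "is_L2 (fourier_L1 \<phi>)" using plancherel_le(1)[of \<phi>] pint psq by simp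
    have P2: "(\<integral>k. (cmod (fourier_L1 \<phi> k))\<^sup>2 \<partial>lborel) \<le> 2*pi * I n"
      using plancherel_le(2)[of \<phi>] pint psq unfolding I_def psq_eq by simp
    have "complex_of_real (I n) = (\<integral>k. complex_of_real (indicator {-real n..real n} k * (cmod (g k))\<^sup>2) \<partial>lborel)"
      unfolding I_def by (rule integral_complex_of_real[symmetric])
    also have "\<dots> = (\<integral>k. g k * \<phi> k \<partial>lborel)"
    proof (rule Bochner_Integration.integral_cong[OF refl])
      fix k
      show "complex_of_real (indicator {-real n..real n} k * (cmod (g k))\<^sup>2) = g k * \<phi> k"
        unfolding \<phi>_def using complex_norm_square[of "g k"]
        by (auto simp: indicator_def)
    qed
    also have "\<dots> = (\<integral>x. h x * fourier_L1 \<phi> x \<partial>lborel)"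
      using hg pint Lp unfolding fourier_L2_def by auto
    finally have eqI: "complex_of_real (I n) = (\<integral>x. h x * fourier_L1 \<phi> x \<partial>lborel)" .
    have "I n \<le> norm (complex_of_real (I n))" by simp
    also have "\<dots> \<le> (\<integral>x. norm (h x * fourier_L1 \<phi> x) \<partial>lborel)"
      unfolding eqI by (rule integral_norm_bound)
    also have "\<dots> \<le> (\<integral>x. pi * (cmod (h x))\<^sup>2 + (cmod (fourier_L1 \<phi> x))\<^sup>2 / (4*pi) \<partial>lborel)"
    proof (rule integral_mono)
      show "integrable lborel (\<lambda>x. norm (h x * fourier_L1 \<phi> x))"
        using L2_prod_int[OF Lh P1] by simp
      show "integrable lborel (\<lambda>x. pi * (cmod (h x))\<^sup>2 + (cmod (fourier_L1 \<phi> x))\<^sup>2 / (4*pi))"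
        using hsq is_L2_sq[OF P1] by (intro Bochner_Integration.integrable_add integrable_mult_right integrable_divide) auto
      fix x
      define a where "a = cmod (h x)"
      define b where "b = cmod (fourier_L1 \<phi> x)"
      have id: "(2*pi*a - b)\<^sup>2 = 4*pi * (pi * a\<^sup>2 + b\<^sup>2 / (4*pi)) - 4*pi * (a * b)"
        by (simp add: power2_eq_square field_simps)
      have "0 \<le> (2*pi*a - b)\<^sup>2" by simp
      then have "4*pi * (a * b) \<le> 4*pi * (pi * a\<^sup>2 + b\<^sup>2 / (4*pi))" unfolding id by simp
      then have "a * b \<le> pi * a\<^sup>2 + b\<^sup>2 / (4*pi)" by simp
      then have "4*pi * (cmod (h x) * cmod (fourier_L1 \<phi> x)) \<le> 4*pi * (pi * (cmod (h x))\<^sup>2 + (cmod (fourier_L1 \<phi> x))\<^sup>2 / (4*pi))"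
        unfolding a_def b_def by simp
      then show "norm (h x * fourier_L1 \<phi> x) \<le> pi * (cmod (h x))\<^sup>2 + (cmod (fourier_L1 \<phi> x))\<^sup>2 / (4*pi)"
        by (simp add: norm_mult)
    qed
    also have "\<dots> = pi * B0 + (\<integral>x. (cmod (fourier_L1 \<phi> x))\<^sup>2 \<partial>lborel) / (4*pi)"
      using hsq is_L2_sq[OF P1] unfolding B0_def
      by (subst Bochner_Integration.integral_add) auto
    also have "\<dots> \<le> pi * B0 + (2*pi*I n) / (4*pi)"
      using P2 by (intro add_left_mono divide_right_mono) auto
    finally show ?thesis by (simp add: field_simps)
  qed
  have lim: "I \<longlonglongrightarrow> (\<integral>k. (cmod (g k))\<^sup>2 \<partial>lborel)"
    unfolding I_def
  proof (rule integral_dominated_convergence[where w="\<lambda>k. (cmod (g k))\<^sup>2"])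
    show "(\<lambda>k. (cmod (g k))\<^sup>2) \<in> borel_measurable lborel" by simp
    show "(\<lambda>k. indicator {-real n..real n} k * (cmod (g k))\<^sup>2) \<in> borel_measurable lborel" for n by simp
    show "integrable lborel (\<lambda>k. (cmod (g k))\<^sup>2)" by (rule gsq)
    show "AE k in lborel. (\<lambda>n. indicator {-real n..real n} k * (cmod (g k))\<^sup>2) \<longlonglongrightarrow> (cmod (g k))\<^sup>2"
    proof (rule AE_I2)
      fix k :: real
      obtain N :: nat where N: "\<bar>k\<bar> \<le> real N" using real_arch_simple by blast
      have "eventually (\<lambda>n. indicator {-real n..real n} k * (cmod (g k))\<^sup>2 = (cmod (g k))\<^sup>2) sequentially"
        unfolding eventually_sequentially
        by (rule exI[of _ N]) (use N in \<open>auto simp: indicator_def abs_le_iff\<close>)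
      then show "(\<lambda>n. indicator {-real n..real n} k * (cmod (g k))\<^sup>2) \<longlonglongrightarrow> (cmod (g k))\<^sup>2"
        by (rule tendsto_eventually)
    qed
    show "AE k in lborel. norm (indicator {-real n..real n} k * (cmod (g k))\<^sup>2) \<le> (cmod (g k))\<^sup>2" for n
      by (rule AE_I2) (auto simp: indicator_def)
  qed
  show ?thesis unfolding B0_def[symmetric]
    using lim In by (intro LIMSEQ_le_const2) auto
qed

lemma fourier_L2_unique:
  assumes "fourier_L2 u g1" "fourier_L2 u g2"
  shows "AE k in lborel. g1 k = g2 k"
proof -
  have f: "fourier_L2 (\<lambda>x. u x - u x) (\<lambda>k. g1 k - g2 k)" by (rule fourier_L2_linear[OF assms])
  then have L: "is_L2 (\<lambda>k. g1 k - g2 k)" unfolding fourier_L2_def by auto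
  have "(\<integral>k. (cmod (g1 k - g2 k))\<^sup>2 \<partial>lborel) \<le> 0"
    using fourier_L2_bound[OF f] by simp
  moreover have "(\<integral>k. (cmod (g1 k - g2 k))\<^sup>2 \<partial>lborel) \<ge> 0" by simp
  ultimately have "(\<integral>k. (cmod (g1 k - g2 k))\<^sup>2 \<partial>lborel) = 0" by simp
  then have "AE k in lborel. (cmod (g1 k - g2 k))\<^sup>2 = 0"
    using is_L2_sq[OF L] by (subst integral_nonneg_eq_0_iff_AE[symmetric]) auto
  then show ?thesis by eventually_elim simp
qed

lemma weight_bound:
  fixes \<alpha> :: "real \<Rightarrow> real" and m a \<delta> R :: real
  assumes m: "m \<ge> 1" and a: "a > 0" and d: "\<delta> > 0" and anon: "\<And>k. \<alpha> k \<ge> 0"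
    and R: "\<forall>k. \<bar>k\<bar> \<ge> R \<longrightarrow> a * \<bar>k\<bar> powr m \<le> \<alpha> k"
  shows "\<exists>M>0. \<forall>k. (1 + k\<^sup>2) powr (m/2) \<le> M * (\<alpha> k + \<delta>)"
proof -
  define R1 where "R1 = max R 1"
  define M where "M = max (2 powr (m/2) / a) ((1 + R1\<^sup>2) powr (m/2) / \<delta>)"
  have Mpos: "M > 0" unfolding M_def using a by (simp add: less_max_iff_disj)
  have "(1 + k\<^sup>2) powr (m/2) \<le> M * (\<alpha> k + \<delta>)" for k
  proof (cases "\<bar>k\<bar> \<ge> R1")
    case True
    then have k1: "\<bar>k\<bar> \<ge> 1" and kR: "\<bar>k\<bar> \<ge> R" unfolding R1_def by auto
    have "1 \<le> \<bar>k\<bar>\<^sup>2" using k1 by (rule one_le_power)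
    then have "1 + k\<^sup>2 \<le> 2 * k\<^sup>2" by simp
    then have "(1 + k\<^sup>2) powr (m/2) \<le> (2 * k\<^sup>2) powr (m/2)"
      using m by (intro powr_mono2) auto
    also have "\<dots> = 2 powr (m/2) * (k\<^sup>2) powr (m/2)" by (simp add: powr_mult)
    also have "(k\<^sup>2) powr (m/2) = \<bar>k\<bar> powr m"
    proof -
      have "(k\<^sup>2) = \<bar>k\<bar> powr 2" using k1 by (simp add: powr_numeral)
      then have "(k\<^sup>2) powr (m/2) = (\<bar>k\<bar> powr 2) powr (m/2)" by simp
      also have "\<dots> = \<bar>k\<bar> powr (2 * (m/2))" by (rule powr_powr)
      also have "2 * (m/2) = m" by simp
      finally show ?thesis .
    qed
    also have "2 powr (m/2) * \<bar>k\<bar> powr m \<le> 2 powr (m/2) * (\<alpha> k / a)"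
      using R kR a by (intro mult_left_mono) (auto simp: field_simps)
    also have "\<dots> = (2 powr (m/2) / a) * \<alpha> k" by simp
    also have "\<dots> \<le> M * \<alpha> k" unfolding M_def using anon by (intro mult_right_mono) auto
    also have "\<dots> \<le> M * (\<alpha> k + \<delta>)" using Mpos d by (intro mult_left_mono) auto
    finally show ?thesis .
  next
    case False
    then have "\<bar>k\<bar>\<^sup>2 \<le> R1\<^sup>2" by (intro power_mono) auto
    then have "k\<^sup>2 \<le> R1\<^sup>2" by simp
    then have "(1 + k\<^sup>2) powr (m/2) \<le> (1 + R1\<^sup>2) powr (m/2)"
      using m by (intro powr_mono2) auto
    also have "\<dots> = ((1 + R1\<^sup>2) powr (m/2) / \<delta>) * \<delta>" using d by simp
    also have "\<dots> \<le> M * \<delta>" unfolding M_def using d by (intro mult_right_mono) auto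
    also have "\<dots> \<le> M * (\<alpha> k + \<delta>)" using Mpos anon by (intro mult_left_mono) (auto simp: add_increasing)
    finally show ?thesis .
  qed
  with Mpos show ?thesis by blast
qed

lemma pointwise_est:
  fixes gu gv gw z :: complex and \<alpha> \<delta> c lam M w k :: real
  assumes c: "c > 1" and lam: "lam > 0" and z: "Re z \<le> (1 - 1/c)/2" and d: "\<delta> = (1 - 1/c)/2"
    and an: "\<alpha> \<ge> 0" and w: "w \<le> M * (\<alpha> + \<delta>)" and M: "M > 0"
    and eq: "gv = (complex_of_real \<alpha> + 1 - z) * gu
          - complex_of_real (1/c) *
              (1 - complex_of_real lam / (complex_of_real lam - \<i> * complex_of_real (c * k))) * gw"
  shows "w * (cmod gu)\<^sup>2 \<le> 2*M/\<delta> * ((cmod gv)\<^sup>2 + (cmod (gw - gu))\<^sup>2)"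
proof -
  define s where "s = 1 - complex_of_real lam / (complex_of_real lam - \<i> * complex_of_real (c * k))"
  define \<beta> where "\<beta> = complex_of_real \<alpha> + 1 - z"
  define Q where "Q = gw - gu"
  have "1/c < 1" using c by simp
  then have dpos: "\<delta> > 0" using d by simp
  have ne: "complex_of_real lam - \<i> * complex_of_real (c * k) \<noteq> 0"
  proof
    assume "complex_of_real lam - \<i> * complex_of_real (c * k) = 0"
    then have "Re (complex_of_real lam - \<i> * complex_of_real (c * k)) = 0" by simp
    with lam show False by simp
  qed
  have s_eq: "s = - (\<i> * complex_of_real (c * k)) / (complex_of_real lam - \<i> * complex_of_real (c * k))"
    unfolding s_def using ne by (simp add: field_simps)
  have "cmod (\<i> * complex_of_real (c * k)) \<le> cmod (complex_of_real lam - \<i> * complex_of_real (c * k))"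
  proof -
    have "cmod (\<i> * complex_of_real (c * k)) = \<bar>Im (complex_of_real lam - \<i> * complex_of_real (c * k))\<bar>"
      by (simp add: norm_mult abs_mult)
    also have "\<dots> \<le> cmod (complex_of_real lam - \<i> * complex_of_real (c * k))" by (rule abs_Im_le_cmod)
    finally show ?thesis .
  qed
  then have s1: "cmod s \<le> 1" unfolding s_eq using ne by (simp add: norm_divide divide_le_eq_1)
  have eq': "\<beta> * gu = gv + complex_of_real (1/c) * s * (gu + Q)"
    using eq unfolding \<beta>_def s_def Q_def by (simp add: algebra_simps)
  have Reb: "Re \<beta> \<ge> \<alpha> + \<delta> + 1/c" unfolding \<beta>_def using z d by (simp add: field_simps)
  have "cmod \<beta> \<ge> \<alpha> + \<delta> + 1/c" using Reb complex_Re_le_cmod[of \<beta>] by linarith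
  have cb: "cmod \<beta> * cmod gu \<le> cmod gv + (1/c) * (cmod gu + cmod Q)"
  proof -
    have "cmod \<beta> * cmod gu = cmod (gv + complex_of_real (1/c) * s * (gu + Q))"
      unfolding eq'[symmetric] by (simp add: norm_mult)
    also have "\<dots> \<le> cmod gv + cmod (complex_of_real (1/c) * s * (gu + Q))" by (rule norm_triangle_ineq)
    also have "cmod (complex_of_real (1/c) * s * (gu + Q)) = (1/c) * cmod s * cmod (gu + Q)"
      using c by (simp add: norm_mult norm_divide)
    also have "\<dots> \<le> (1/c) * 1 * (cmod gu + cmod Q)"
      using c s1 norm_triangle_ineq[of gu Q] by (intro mult_mono) auto
    finally show ?thesis by simp
  qed
  define t where "t = cmod gu"
  define p where "p = cmod gv + cmod Q"
  define e where "e = \<alpha> + \<delta>"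
  have epos: "e > 0" unfolding e_def using an dpos by simp
  have tpos: "t \<ge> 0" unfolding t_def by simp
  have ppos: "p \<ge> 0" unfolding p_def by simp
  have "(\<alpha> + \<delta> + 1/c) * t \<le> cmod \<beta> * t"
    using \<open>cmod \<beta> \<ge> \<alpha> + \<delta> + 1/c\<close> tpos by (intro mult_right_mono) auto
  with cb have "(\<alpha> + \<delta>) * t \<le> cmod gv + (1/c) * cmod Q" unfolding t_def by (simp add: algebra_simps)
  moreover have "(1/c) * cmod Q \<le> cmod Q" using c by (simp add: field_simps mult_le_cancel_right1)
  ultimately have et: "e * t \<le> p" unfolding e_def p_def by linarith
  have "e * t\<^sup>2 \<le> p * t" using et tpos unfolding power2_eq_square
    by (metis mult.assoc mult_right_mono)
  also have "p * t \<le> p * (p / e)" using et epos ppos by (intro mult_left_mono) (auto simp: field_simps)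
  finally have "e * t\<^sup>2 \<le> p\<^sup>2 / e" by (simp add: power2_eq_square)
  also have "p\<^sup>2 / e \<le> p\<^sup>2 / \<delta>" using epos dpos an unfolding e_def by (intro divide_left_mono) auto
  finally have et2: "e * t\<^sup>2 \<le> p\<^sup>2 / \<delta>" .
  have "w * t\<^sup>2 \<le> M * e * t\<^sup>2" using w unfolding e_def by (intro mult_right_mono) auto
  also have "\<dots> = M * (e * t\<^sup>2)" by simp
  also have "\<dots> \<le> M * (p\<^sup>2 / \<delta>)" using M et2 by (intro mult_left_mono) auto
  also have "p\<^sup>2 \<le> 2 * ((cmod gv)\<^sup>2 + (cmod Q)\<^sup>2)"
    unfolding p_def using sum_squares_bound[of "cmod gv" "cmod Q"] by (simp add: power2_sum)
  then have "M * (p\<^sup>2 / \<delta>) \<le> M * (2 * ((cmod gv)\<^sup>2 + (cmod Q)\<^sup>2) / \<delta>)"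
    using M dpos by (intro mult_left_mono divide_right_mono) auto
  finally show ?thesis unfolding t_def Q_def by (simp add: field_simps)
qed

theorem mainTheorem11:
  fixes f f' :: "real \<Rightarrow> real" and \<alpha> :: "real \<Rightarrow> real" and m a b c :: real
    and uc :: "real \<Rightarrow> real"
  assumes f_deriv: "\<And>x. (f has_real_derivative f' x) (at x)"
    and f'_cont: "continuous_on UNIV f'"
    and f0: "f 0 = 0" and f'0: "f' 0 = 0"
    and \<alpha>_nonneg: "\<And>k. \<alpha> k \<ge> 0"
    and \<alpha>_locbdd: "\<And>K. compact K \<Longrightarrow> bounded (\<alpha> ` K)"
    and m_ge: "m \<ge> 1" and a_pos: "a > 0" and b_pos: "b > 0"
    and \<alpha>_growth: "\<exists>R. \<forall>k. \<bar>k\<bar> \<ge> R \<longrightarrow> a * \<bar>k\<bar> powr m \<le> \<alpha> k \<and> \<alpha> k \<le> b * \<bar>k\<bar> powr m"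
    and c_gt: "c > 1"
    and uc_H: "sobolev m (\<lambda>x. complex_of_real (uc x))"
    and uc_eq: "profile_eq \<alpha> c f uc"
    and uc_decay: "(uc \<longlongrightarrow> 0) at_infinity"
  shows "\<exists>lam0 > 0. \<exists>C > 0. \<forall>lam z u v.
           0 < lam \<and> lam < lam0 \<and> Re z \<le> (1 - 1/c) / 2 \<and>
           is_L2 v \<and> sobolev m u \<and> A_minus_z_eq \<alpha> c f' uc lam z u v \<longrightarrow>
           sobolev_norm (m/2) u \<le> C * (L2e_norm f' uc u + L2_norm v)"
proof -
  obtain R where R: "\<forall>k. \<bar>k\<bar> \<ge> R \<longrightarrow> a * \<bar>k\<bar> powr m \<le> \<alpha> k \<and> \<alpha> k \<le> b * \<bar>k\<bar> powr m"
    using \<alpha>_growth by blast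
  define \<delta> where "\<delta> = (1 - 1/c)/2"
  have "1/c < 1" using c_gt by simp
  then have dpos: "\<delta> > 0" unfolding \<delta>_def by simp
  have R': "\<forall>k. \<bar>k\<bar> \<ge> R \<longrightarrow> a * \<bar>k\<bar> powr m \<le> \<alpha> k" using R by blast
  obtain M where M: "M > 0" and wM: "\<And>k. (1 + k\<^sup>2) powr (m/2) \<le> M * (\<alpha> k + \<delta>)"
    using weight_bound[OF m_ge a_pos dpos \<alpha>_nonneg R'] by blast
  define K where "K = 2*M/\<delta> * (2*pi)"
  have Kpos: "K > 0" unfolding K_def using M dpos by simp
  have main: "\<forall>lam z u v.
           0 < lam \<and> lam < 1 \<and> Re z \<le> (1 - 1/c) / 2 \<and>
           is_L2 v \<and> sobolev m u \<and> A_minus_z_eq \<alpha> c f' uc lam z u v \<longrightarrow>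
           sobolev_norm (m/2) u \<le> sqrt K * (L2e_norm f' uc u + L2_norm v)"
  proof (intro allI impI)
    fix lam z u v
    assume H: "0 < lam \<and> lam < 1 \<and> Re z \<le> (1 - 1/c) / 2 \<and> is_L2 v \<and> sobolev m u \<and> A_minus_z_eq \<alpha> c f' uc lam z u v"
    then have lam: "lam > 0" and zr: "Re z \<le> (1 - 1/c)/2" and Lv: "is_L2 v" and Aeq: "A_minus_z_eq \<alpha> c f' uc lam z u v"
      by auto
    obtain gu gw gv where fu: "fourier_L2 u gu"
      and fw: "fourier_L2 (\<lambda>x. (1 + complex_of_real (f' (uc x))) * u x) gw"
      and fv: "fourier_L2 v gv"
      and ae: "AE k in lborel. gv k =
          (complex_of_real (\<alpha> k) + 1 - z) * gu k
          - complex_of_real (1/c) *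
              (1 - complex_of_real lam / (complex_of_real lam - \<i> * complex_of_real (c * k))) * gw k"
      using Aeq unfolding A_minus_z_eq_def by blast
    have fQ: "fourier_L2 (\<lambda>x. (1 + complex_of_real (f' (uc x))) * u x - u x) (\<lambda>k. gw k - gu k)"
      by (rule fourier_L2_linear[OF fw fu])
    have Lu: "is_L2 u" using fu unfolding fourier_L2_def by auto
    have Lq: "is_L2 (\<lambda>x. (1 + complex_of_real (f' (uc x))) * u x - u x)" using fQ unfolding fourier_L2_def by auto
    have qeq: "(cmod ((1 + complex_of_real (f' (uc x))) * u x - u x))\<^sup>2 = (f' (uc x))\<^sup>2 * (cmod (u x))\<^sup>2" for x
    proof -
      have "(1 + complex_of_real (f' (uc x))) * u x - u x = complex_of_real (f' (uc x)) * u x"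
        by (simp add: algebra_simps)
      then show ?thesis by (simp add: norm_mult power_mult_distrib)
    qed
    define Ev where "Ev = (\<integral>x. (cmod (v x))\<^sup>2 \<partial>lborel)"
    define Ee where "Ee = (\<integral>x. (f' (uc x))\<^sup>2 * (cmod (u x))\<^sup>2 \<partial>lborel)"
    have Evpos: "Ev \<ge> 0" unfolding Ev_def by simp
    have Eepos: "Ee \<ge> 0" unfolding Ee_def by simp
    have bQ: "(\<integral>k. (cmod (gw k - gu k))\<^sup>2 \<partial>lborel) \<le> 2*pi*Ee"
      using fourier_L2_bound[OF fQ] unfolding qeq Ee_def .
    have bV: "(\<integral>k. (cmod (gv k))\<^sup>2 \<partial>lborel) \<le> 2*pi*Ev"
      using fourier_L2_bound[OF fv] unfolding Ev_def .
    have fF: "fourier_L2 u (fourier u)" unfolding fourier_def by (rule someI[of _ gu]) (rule fu)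
    have aeF: "AE k in lborel. fourier u k = gu k" by (rule fourier_L2_unique[OF fF fu])
    have LF: "is_L2 (fourier u)" using fF unfolding fourier_L2_def by auto
    have LV: "is_L2 gv" using fv unfolding fourier_L2_def by auto
    have LQ: "is_L2 (\<lambda>k. gw k - gu k)" using fQ unfolding fourier_L2_def by auto
    have [measurable]: "fourier u \<in> borel_measurable borel" using LF by (rule is_L2_meas)
    define bnd where "bnd = (\<lambda>k. 2*M/\<delta> * ((cmod (gv k))\<^sup>2 + (cmod (gw k - gu k))\<^sup>2))"
    have bnd_int: "integrable lborel bnd"
      unfolding bnd_def using is_L2_sq[OF LV] is_L2_sq[OF LQ]
      by (intro integrable_mult_right Bochner_Integration.integrable_add)
    have ptw: "AE k in lborel. (1 + k\<^sup>2) powr (m/2) * (cmod (fourier u k))\<^sup>2 \<le> bnd k"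
      using ae aeF
    proof eventually_elim
      case (elim k)
      have "(1 + k\<^sup>2) powr (m/2) * (cmod (gu k))\<^sup>2 \<le> bnd k"
        unfolding bnd_def
        by (rule pointwise_est[OF c_gt lam zr \<delta>_def \<alpha>_nonneg wM M elim(1)])
      then show ?case using elim(2) by simp
    qed
    have lhs_int: "integrable lborel (\<lambda>k. (1 + k\<^sup>2) powr (m/2) * (cmod (fourier u k))\<^sup>2)"
    proof (rule Bochner_Integration.integrable_bound[OF bnd_int])
      show "(\<lambda>k. (1 + k\<^sup>2) powr (m/2) * (cmod (fourier u k))\<^sup>2) \<in> borel_measurable lborel" by simp
      show "AE k in lborel. norm ((1 + k\<^sup>2) powr (m/2) * (cmod (fourier u k))\<^sup>2) \<le> norm (bnd k)"
        using ptw by eventually_elim auto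
    qed
    have "(\<integral>k. (1 + k\<^sup>2) powr (m/2) * (cmod (fourier u k))\<^sup>2 \<partial>lborel) \<le> (\<integral>k. bnd k \<partial>lborel)"
      by (rule integral_mono_AE[OF lhs_int bnd_int ptw])
    also have "(\<integral>k. bnd k \<partial>lborel) = 2*M/\<delta> * ((\<integral>k. (cmod (gv k))\<^sup>2 \<partial>lborel) + (\<integral>k. (cmod (gw k - gu k))\<^sup>2 \<partial>lborel))"
      unfolding bnd_def using is_L2_sq[OF LV] is_L2_sq[OF LQ]
      by (simp add: Bochner_Integration.integral_add)
    also have "\<dots> \<le> 2*M/\<delta> * (2*pi*Ev + 2*pi*Ee)"
      using bV bQ M dpos by (intro mult_left_mono add_mono) auto
    also have "\<dots> = K * (Ev + Ee)" unfolding K_def by (simp add: algebra_simps add_divide_distrib)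
    finally have I: "(\<integral>k. (1 + k\<^sup>2) powr (m/2) * (cmod (fourier u k))\<^sup>2 \<partial>lborel) \<le> K * (Ev + Ee)" .
    have "sobolev_norm (m/2) u \<le> sqrt (K * (Ev + Ee))"
      unfolding sobolev_norm_def using I by simp
    also have "\<dots> = sqrt K * sqrt (Ev + Ee)" by (simp add: real_sqrt_mult)
    also have "sqrt (Ev + Ee) \<le> sqrt Ee + sqrt Ev"
    proof -
      have "Ev + Ee \<le> (sqrt Ee + sqrt Ev)\<^sup>2"
        using Evpos Eepos by (simp add: power2_sum)
      then show ?thesis
        by (metis add_nonneg_nonneg real_sqrt_ge_zero real_sqrt_le_mono real_sqrt_pow2_iff real_sqrt_unique Eepos Evpos)
    qed
    then have "sqrt K * sqrt (Ev + Ee) \<le> sqrt K * (sqrt Ee + sqrt Ev)"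
      using Kpos by (intro mult_left_mono) auto
    also have "sqrt Ee + sqrt Ev = L2e_norm f' uc u + L2_norm v"
      unfolding Ee_def Ev_def L2e_norm_def L2_norm_def ..
    finally show "sobolev_norm (m/2) u \<le> sqrt K * (L2e_norm f' uc u + L2_norm v)" .
  qed
  show ?thesis
    apply (rule exI[of _ 1])
    apply (intro conjI)
     apply simp
    apply (rule exI[of _ "sqrt K"])
    using Kpos main by simp
qed

end
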